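(* Let $n\ge1$, let $C=(c_{i,j})$ be an $n\times n$ Bott matrix over $\mathbb{Z}_2$, $Y_n=Y(C)$ the associated real Bott tower and $\alpha_{n+1},\dots,\alpha_{2n}\in\pi_1(Y_n)$ as defined below. Then the commutator subgroup $[\pi_1(Y_n),\pi_1(Y_n)]$ is a free abelian group with generators $\alpha_q^2$, where $n+1\le q\le 2n$ ranges over those indices for which there exists $p<q$ with $c_{p-n,q-n}=1$.
   Context: A Bott matrix is an $n\times n$ matrix $C=(c_{i,j})$ with entries in $\mathbb{Z}_2$ such that $c_{i,i}=1$ and $c_{i,j}=0$ for $i>j$. Label the facets of the $n$-cube $I^n$ as $F_1,\dots,F_{2n}$ with $F_j$, $F_{n+j}$ opposite. With $e_1,\dots,e_n$ the standard basis of $\mathbb{Z}_2^n$, set $\lambda(F_j)=e_j$, $\lambda(F_{n+j})=e_j+\sum_{k>j}c_{j,k}e_k$. The real Bott tower $Y(C)$ is the small cover $(\mathbb{Z}_2^n\times I^n)/\sim$, where $(t,p)\sim(t',p')$ iff $p=p'$ and $t-t'$ lies in the span of $\lambda(F)$ over facets $F\ni p$. Let $W$ be the right-angled Coxeter group with generators $s_1,\dots,s_{2n}$ and relations $s_j^2=1$ and $(s_is_j)^2=1$ for $1\le i<j\le 2n$, $j\ne i+n$; then $\pi_1(Y_n)$ is the kernel of the homomorphism $W\to\mathbb{Z}_2^n$, $s_i\mapsto\lambda(F_i)$. For $n+1\le j\le 2n$, $\alpha_j:=s_js_{j-n}s_{j-n+1}^{c_{j-n,j-n+1}}\cdots s_n^{c_{j-n,n}}$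 (so $\alpha_{2n}=s_{2n}s_n$); these lie in $\pi_1(Y_n)$. *)

theory Defs
  imports "HOL-Algebra.Free_Abelian_Groups" "HOL-Algebra.Generated_Groups"
begin

text \<open>Bott matrix: c :: nat => nat => bool, entries indexed by 1..n; True = 1 in Z_2.\<close>
definition bott_matrix :: "nat \<Rightarrow> (nat \<Rightarrow> nat \<Rightarrow> bool) \<Rightarrow> bool" where
  "bott_matrix n c \<longleftrightarrow> (\<forall>i\<in>{1..n}. c i i) \<and> (\<forall>i\<in>{1..n}. \<forall>j\<in>{1..n}. i > j \<longrightarrow> \<not> c i j)"

text \<open>Relators of the right-angled Coxeter group W on generators s_1..s_{2n}:
  s_j^2 and (s_i s_j)^2 for i<j, j \<noteq> i+n.\<close>
definition relators :: "nat \<Rightarrow> nat list set" where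
  "relators n = {[s, s] | s. s \<in> {1..2*n}}
     \<union> {[i, j, i, j] | i j. i \<in> {1..2*n} \<and> j \<in> {1..2*n} \<and> i < j \<and> j \<noteq> i + n}"

definition words :: "nat \<Rightarrow> nat list set" where
  "words n = {w. set w \<subseteq> {1..2*n}}"

inductive weq :: "nat \<Rightarrow> nat list \<Rightarrow> nat list \<Rightarrow> bool" for n where
  weq_refl: "w \<in> words n \<Longrightarrow> weq n w w"
| weq_sym: "weq n u v \<Longrightarrow> weq n v u"
| weq_trans: "weq n u v \<Longrightarrow> weq n v w \<Longrightarrow> weq n u w"
| weq_rel: "u \<in> words n \<Longrightarrow> v \<in> words n \<Longrightarrow> r \<in> relators n \<Longrightarrow> weq n (u @ r @ v) (u @ v)"

definition cls :: "nat \<Rightarrow> nat list \<Rightarrow> nat list set" where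
  "cls n w = {v. weq n w v}"

definition rep :: "nat list set \<Rightarrow> nat list" where
  "rep X = (SOME w. w \<in> X)"

text \<open>The right-angled Coxeter group W (every generator is an involution, so the
  monoid of words modulo the relator congruence is the presented group).\<close>
definition coxW :: "nat \<Rightarrow> nat list set monoid" where
  "coxW n = \<lparr> carrier = cls n ` words n,
              mult = (\<lambda>X Y. cls n (rep X @ rep Y)),
              one = cls n [] \<rparr>"

definition Z2n :: "nat \<Rightarrow> (nat \<Rightarrow> bool) monoid" where
  "Z2n n = \<lparr> carrier = {v. \<forall>i. v i \<longrightarrow> i \<in> {1..n}},
             mult = (\<lambda>u v i. u i \<noteq> v i),
             one = (\<lambda>_. False) \<rparr>"

definition lam :: "nat \<Rightarrow> (nat \<Rightarrow> nat \<Rightarrow> bool) \<Rightarrow> nat \<Rightarrow> nat \<Rightarrow> bool" where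
  "lam n c s = (if s \<le> n then (\<lambda>k. k = s)
                else (\<lambda>k. k = s - n \<or> (s - n < k \<and> k \<le> n \<and> c (s - n) k)))"

definition lam_word :: "nat \<Rightarrow> (nat \<Rightarrow> nat \<Rightarrow> bool) \<Rightarrow> nat list \<Rightarrow> nat \<Rightarrow> bool" where
  "lam_word n c w = foldr (\<lambda>s acc k. lam n c s k \<noteq> acc k) w (\<lambda>_. False)"

definition lamhom :: "nat \<Rightarrow> (nat \<Rightarrow> nat \<Rightarrow> bool) \<Rightarrow> nat list set \<Rightarrow> nat \<Rightarrow> bool" where
  "lamhom n c X = lam_word n c (rep X)"

definition pi1 :: "nat \<Rightarrow> (nat \<Rightarrow> nat \<Rightarrow> bool) \<Rightarrow> nat list set set" where
  "pi1 n c = kernel (coxW n) (Z2n n) (lamhom n c)"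

definition alpha :: "nat \<Rightarrow> (nat \<Rightarrow> nat \<Rightarrow> bool) \<Rightarrow> nat \<Rightarrow> nat list set" where
  "alpha n c j = cls n ([j, j - n] @ filter (\<lambda>k. c (j - n) k) [j - n + 1..<n + 1])"

definition index_set :: "nat \<Rightarrow> (nat \<Rightarrow> nat \<Rightarrow> bool) \<Rightarrow> nat set" where
  "index_set n c = {q. n + 1 \<le> q \<and> q \<le> 2*n \<and> (\<exists>p. n + 1 \<le> p \<and> p < q \<and> c (p - n) (q - n))}"

end

theory Submission
  imports Defs
begin


lemma weq_words: "weq n u v \<Longrightarrow> u \<in> words n \<and> v \<in> words n"
  by (induction rule: weq.induct) (auto simp: words_def relators_def)

lemma words_append[simp]: "u @ v \<in> words n \<longleftrightarrow> u \<in> words n \<and> v \<in> words n"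
  by (auto simp: words_def)

lemma words_Cons[simp]: "s # v \<in> words n \<longleftrightarrow> s \<in> {1..2*n} \<and> v \<in> words n"
  by (auto simp: words_def)

lemma words_rev[simp]: "rev w \<in> words n \<longleftrightarrow> w \<in> words n"
  by (auto simp: words_def)

lemma words_Nil[simp]: "[] \<in> words n"
  by (auto simp: words_def)

lemma weq_app_right: "weq n u v \<Longrightarrow> w \<in> words n \<Longrightarrow> weq n (u @ w) (v @ w)"
proof (induction rule: weq.induct)
  case (weq_refl w') then show ?case by (auto intro: weq.weq_refl)
next
  case (weq_sym u v) then show ?case by (auto intro: weq.weq_sym)
next
  case (weq_trans u v w') then show ?case by (meson weq.weq_trans)
next
  case (weq_rel u v r) then show ?case using weq.weq_rel[of u n "v @ w" r] by simp
qed

lemma weq_app_left: "weq n u v \<Longrightarrow> w \<in> words n \<Longrightarrow> weq n (w @ u) (w @ v)"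
proof (induction rule: weq.induct)
  case (weq_refl w') then show ?case by (auto intro: weq.weq_refl)
next
  case (weq_sym u v) then show ?case by (auto intro: weq.weq_sym)
next
  case (weq_trans u v w') then show ?case by (meson weq.weq_trans)
next
  case (weq_rel u v r) then show ?case using weq.weq_rel[of "w @ u" n v r] by simp
qed

lemma weq_app: "weq n u u' \<Longrightarrow> weq n v v' \<Longrightarrow> weq n (u @ v) (u' @ v')"
  by (meson weq_app_left weq_app_right weq.weq_trans weq_words)

lemma cls_eq_iff: "u \<in> words n \<Longrightarrow> cls n u = cls n v \<longleftrightarrow> weq n u v"
proof
  assume u: "u \<in> words n" and "cls n u = cls n v"
  moreover have "u \<in> cls n u" using u by (simp add: cls_def weq.weq_refl)
  ultimately have "weq n v u" by (simp add: cls_def)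
  then show "weq n u v" by (rule weq.weq_sym)
next
  assume "weq n u v"
  then show "cls n u = cls n v" unfolding cls_def
    by (auto intro: weq.weq_trans weq.weq_sym)
qed

lemma rep_cls: "u \<in> words n \<Longrightarrow> weq n u (rep (cls n u))"
  unfolding rep_def cls_def by (metis mem_Collect_eq someI_ex weq.weq_refl)

lemma rep_cls_words: "u \<in> words n \<Longrightarrow> rep (cls n u) \<in> words n"
  using rep_cls weq_words by blast

lemma mult_cls: "u \<in> words n \<Longrightarrow> v \<in> words n \<Longrightarrow>
   cls n u \<otimes>\<^bsub>coxW n\<^esub> cls n v = cls n (u @ v)"
  unfolding coxW_def apply simp
  by (metis cls_eq_iff rep_cls rep_cls_words weq_app weq.weq_sym words_append)

lemma one_coxW: "\<one>\<^bsub>coxW n\<^esub> = cls n []" by (simp add: coxW_def)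
lemma carrier_coxW: "carrier (coxW n) = cls n ` words n" by (simp add: coxW_def)

lemma weq_rev: "w \<in> words n \<Longrightarrow> weq n (rev w @ w) []"
proof (induction w)
  case Nil then show ?case by (auto intro: weq.weq_refl)
next
  case (Cons s w)
  have r: "[s,s] \<in> relators n" using Cons.prems by (auto simp: relators_def)
  have "weq n (rev w @ [s,s] @ w) (rev w @ w)"
    using Cons.prems by (intro weq.weq_rel r) auto
  then show ?case using Cons by (auto intro: weq.weq_trans)
qed

lemma group_coxW: "group (coxW n)"
proof (rule groupI)
  fix x y assume "x \<in> carrier (coxW n)" "y \<in> carrier (coxW n)"
  then show "x \<otimes>\<^bsub>coxW n\<^esub> y \<in> carrier (coxW n)"
    by (auto simp: carrier_coxW mult_cls)
next
  show "\<one>\<^bsub>coxW n\<^esub> \<in> carrier (coxW n)" by (auto simp: carrier_coxW one_coxW)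
next
  fix x y z assume "x \<in> carrier (coxW n)" "y \<in> carrier (coxW n)" "z \<in> carrier (coxW n)"
  then show "x \<otimes>\<^bsub>coxW n\<^esub> y \<otimes>\<^bsub>coxW n\<^esub> z = x \<otimes>\<^bsub>coxW n\<^esub> (y \<otimes>\<^bsub>coxW n\<^esub> z)"
    by (auto simp: carrier_coxW mult_cls)
next
  fix x assume "x \<in> carrier (coxW n)"
  then show "\<one>\<^bsub>coxW n\<^esub> \<otimes>\<^bsub>coxW n\<^esub> x = x"
    by (auto simp: carrier_coxW mult_cls one_coxW)
next
  fix x assume "x \<in> carrier (coxW n)"
  then obtain w where w: "w \<in> words n" "x = cls n w" by (auto simp: carrier_coxW)
  have "rev w \<in> words n" using w by (auto simp: words_def)
  moreover have "cls n (rev w) \<otimes>\<^bsub>coxW n\<^esub> x = \<one>\<^bsub>coxW n\<^esub>"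
    using w calculation by (simp add: mult_cls one_coxW cls_eq_iff weq_rev)
  ultimately show "\<exists>y\<in>carrier (coxW n). y \<otimes>\<^bsub>coxW n\<^esub> x = \<one>\<^bsub>coxW n\<^esub>"
    by (auto simp: carrier_coxW)
qed



type_synonym dv = "bool \<times> int"

fun cmp :: "dv \<Rightarrow> dv \<Rightarrow> dv" where
  "cmp (e1, t1) (e2, t2) = (e1 \<noteq> e2, (if e1 then - t2 else t2) + t1)"

lemma cmp_assoc: "cmp (cmp x y) z = cmp x (cmp y z)"
  by (cases x; cases y; cases z) auto

lemma cmp_id[simp]: "cmp (False, 0) x = x" "cmp x (False, 0) = x"
  by (cases x; simp)+

definition crd :: "nat \<Rightarrow> nat \<Rightarrow> nat" where "crd n s = (if s \<le> n then s else s - n)"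
definition gval :: "nat \<Rightarrow> nat \<Rightarrow> dv" where "gval n s = (if s \<le> n then (True, 0) else (True, 1))"
definition idD :: "nat \<Rightarrow> dv" where "idD = (\<lambda>_. (False, 0))"
definition comp :: "(nat \<Rightarrow> dv) \<Rightarrow> (nat \<Rightarrow> dv) \<Rightarrow> nat \<Rightarrow> dv" where
  "comp g h = (\<lambda>k. cmp (g k) (h k))"
definition gen :: "nat \<Rightarrow> nat \<Rightarrow> nat \<Rightarrow> dv" where "gen n s = idD(crd n s := gval n s)"
definition ev :: "nat \<Rightarrow> nat list \<Rightarrow> nat \<Rightarrow> dv" where
  "ev n w = foldr (\<lambda>s h. comp (gen n s) h) w idD"

lemma comp_assoc: "comp (comp f g) h = comp f (comp g h)"
  by (simp add: comp_def cmp_assoc)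
lemma comp_id[simp]: "comp idD h = h" "comp h idD = h"
  by (simp_all add: comp_def idD_def)

lemma ev_Nil[simp]: "ev n [] = idD" by (simp add: ev_def)
lemma ev_Cons[simp]: "ev n (s # w) = comp (gen n s) (ev n w)" by (simp add: ev_def)
lemma ev_append: "ev n (u @ v) = comp (ev n u) (ev n v)"
  by (induction u) (simp_all add: comp_assoc)

lemma cmp_gval_twice: "cmp (gval n s) (cmp (gval n s) x) = x" "cmp (gval n s) (gval n s) = (False, 0)"
  by (cases x, auto simp: gval_def)+

lemma ev_rel: "r \<in> relators n \<Longrightarrow> ev n r = idD"
proof -
  assume "r \<in> relators n"
  then consider s where "r = [s, s]" | i j where "r = [i,j,i,j]" "i \<in> {1..2*n}" "j \<in> {1..2*n}" "i < j" "j \<noteq> i + n"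
    unfolding relators_def by blast
  then show ?thesis
  proof cases
    case 1 then show ?thesis
      by (auto simp: fun_eq_iff comp_def gen_def idD_def cmp_gval_twice)
  next
    case 2
    then have "crd n i \<noteq> crd n j" by (auto simp: crd_def)
    then show ?thesis using 2
      by (auto simp: fun_eq_iff comp_def gen_def idD_def cmp_gval_twice)
  qed
qed

lemma ev_weq: "weq n u v \<Longrightarrow> ev n u = ev n v"
  by (induction rule: weq.induct) (simp_all add: ev_append ev_rel)

definition evX :: "nat \<Rightarrow> nat list set \<Rightarrow> nat \<Rightarrow> dv" where "evX n X = ev n (rep X)"

lemma evX_cls: "w \<in> words n \<Longrightarrow> evX n (cls n w) = ev n w"
  unfolding evX_def using rep_cls ev_weq by metis

lemma evX_mult: "X \<in> carrier (coxW n) \<Longrightarrow> Y \<in> carrier (coxW n) \<Longrightarrow>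
  evX n (X \<otimes>\<^bsub>coxW n\<^esub> Y) = comp (evX n X) (evX n Y)"
  by (auto simp: carrier_coxW mult_cls evX_cls ev_append)

lemma evX_one: "evX n \<one>\<^bsub>coxW n\<^esub> = idD"
  by (simp add: one_coxW evX_cls)

definition cinv :: "dv \<Rightarrow> dv" where "cinv x = (fst x, if fst x then snd x else - snd x)"

lemma cmp_inv_unique: "cmp x y = (False, 0) \<Longrightarrow> y = cinv x"
  by (cases x; cases y) (auto simp: cinv_def split: if_splits)

lemma evX_inv: assumes "X \<in> carrier (coxW n)"
  shows "evX n (inv\<^bsub>coxW n\<^esub> X) = (\<lambda>k. cinv (evX n X k))"
proof -
  interpret group "coxW n" by (rule group_coxW)
  have "comp (evX n X) (evX n (inv\<^bsub>coxW n\<^esub> X)) = idD"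
    using assms by (simp flip: evX_mult add: evX_one)
  then show ?thesis by (auto simp: fun_eq_iff comp_def idD_def intro: cmp_inv_unique)
qed



lemma (in group) dinf_conj:
  assumes a: "a \<in> carrier G" and b: "b \<in> carrier G" and aa: "a \<otimes> a = \<one>" and bb: "b \<otimes> b = \<one>"
  shows "a \<otimes> (b \<otimes> a) [^] (t::int) = (b \<otimes> a) [^] (- t) \<otimes> a"
proof -
  have ia: "inv a = a" using inv_equality[OF aa a a] .
  have ib: "inv b = b" using inv_equality[OF bb b b] .
  define c where "c = (\<lambda>x. a \<otimes> x \<otimes> inv a)"
  have ic: "\<And>z. z \<in> carrier G \<Longrightarrow> inv a \<otimes> (a \<otimes> z) = z"
    using a by (simp flip: m_assoc)
  have hc: "c \<in> hom G G"
    unfolding c_def using a by (intro homI) (auto simp: m_assoc ic)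
  have cb: "c (b \<otimes> a) = inv (b \<otimes> a)"
    using a b ia ib by (simp add: c_def inv_mult_group m_assoc aa)
  have "c ((b \<otimes> a) [^] t) = (inv (b \<otimes> a)) [^] t"
    using hom_int_pow[OF hc, of "b \<otimes> a" t] a b cb by (simp add: group_axioms)
  also have "\<dots> = (b \<otimes> a) [^] (- t)" using a b by (simp add: int_pow_inv int_pow_neg)
  finally have 1: "a \<otimes> (b \<otimes> a) [^] t \<otimes> a = (b \<otimes> a) [^] (- t)" using ia by (simp add: c_def)
  have "a \<otimes> (b \<otimes> a) [^] t = a \<otimes> (b \<otimes> a) [^] t \<otimes> (a \<otimes> a)"
    using a b by (simp add: aa)
  also have "\<dots> = (b \<otimes> a) [^] (- t) \<otimes> a" using a b by (simp flip: 1 add: m_assoc)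
  finally show ?thesis .
qed

lemma (in group) dinf_a:
  assumes a: "a \<in> carrier G" and b: "b \<in> carrier G" and aa: "a \<otimes> a = \<one>" and bb: "b \<otimes> b = \<one>"
  shows "a \<otimes> (b \<otimes> a) [^] (t::int) = (b \<otimes> a) [^] (- t) \<otimes> a"
    and "a \<otimes> ((b \<otimes> a) [^] (t::int) \<otimes> a) = (b \<otimes> a) [^] (- t)"
    and "b \<otimes> (b \<otimes> a) [^] (t::int) = (b \<otimes> a) [^] (1 - t) \<otimes> a"
    and "b \<otimes> ((b \<otimes> a) [^] (t::int) \<otimes> a) = (b \<otimes> a) [^] (1 - t)"
proof -
  note dc = dinf_conj[OF assms]
  show 1: "a \<otimes> (b \<otimes> a) [^] (t::int) = (b \<otimes> a) [^] (- t) \<otimes> a" by (rule dc)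
  show 2: "a \<otimes> ((b \<otimes> a) [^] (t::int) \<otimes> a) = (b \<otimes> a) [^] (- t)"
  proof -
    have "a \<otimes> ((b \<otimes> a) [^] t \<otimes> a) = (a \<otimes> (b \<otimes> a) [^] t) \<otimes> a"
      using a b by (simp add: m_assoc)
    also have "\<dots> = (b \<otimes> a) [^] (- t) \<otimes> (a \<otimes> a)" using a b by (simp only: dc) (simp add: m_assoc)
    finally show ?thesis using a b by (simp add: aa)
  qed
  have bba: "b = (b \<otimes> a) \<otimes> a" using a b by (simp add: m_assoc aa)
  have "b \<otimes> (b \<otimes> a) [^] t = (b \<otimes> a) \<otimes> (a \<otimes> (b \<otimes> a) [^] t)"
    using a b by (subst bba) (simp add: m_assoc)
  also have "\<dots> = (b \<otimes> a) \<otimes> (b \<otimes> a) [^] (- t) \<otimes> a" using a b by (simp only: dc) (simp add: m_assoc)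
  also have "\<dots> = (b \<otimes> a) [^] (1 - t) \<otimes> a"
    using a b int_pow_mult[of "b \<otimes> a" 1 "- t"] by simp
  finally show 3: "b \<otimes> (b \<otimes> a) [^] (t::int) = (b \<otimes> a) [^] (1 - t) \<otimes> a" .
  show "b \<otimes> ((b \<otimes> a) [^] (t::int) \<otimes> a) = (b \<otimes> a) [^] (1 - t)"
  proof -
    have "b \<otimes> ((b \<otimes> a) [^] t \<otimes> a) = (b \<otimes> (b \<otimes> a) [^] t) \<otimes> a"
      using a b by (simp add: m_assoc)
    also have "\<dots> = (b \<otimes> a) [^] (1 - t) \<otimes> (a \<otimes> a)" using a b by (simp only: 3) (simp add: m_assoc)
    finally show ?thesis using a b by (simp add: aa)
  qed
qed

lemma (in group) commute_of_rel:
  assumes a: "a \<in> carrier G" and b: "b \<in> carrier G" and aa: "a \<otimes> a = \<one>" and bb: "b \<otimes> b = \<one>"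
    and ab: "a \<otimes> b \<otimes> a \<otimes> b = \<one>"
  shows "a \<otimes> b = b \<otimes> a"
proof -
  have ia: "inv a = a" using inv_equality[OF aa a a] .
  have ib: "inv b = b" using inv_equality[OF bb b b] .
  have "inv (a \<otimes> b) = a \<otimes> b" using a b ab by (intro inv_equality) (auto simp: m_assoc)
  then show ?thesis using a b ia ib by (simp add: inv_mult_group)
qed



definition wrd :: "nat \<Rightarrow> nat \<Rightarrow> dv \<Rightarrow> nat list" where
  "wrd n k x = (if snd x \<ge> 0 then concat (replicate (nat (snd x)) [n+k, k])
                else concat (replicate (nat (- snd x)) [k, n+k])) @ (if fst x then [k] else [])"

definition nfw :: "nat \<Rightarrow> (nat \<Rightarrow> dv) \<Rightarrow> nat list" where
  "nfw n h = concat (map (\<lambda>k. wrd n k (h k)) [1..<n+1])"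

lemma set_wrd: "set (wrd n k x) \<subseteq> {k, n+k}"
  by (auto simp: wrd_def)

lemma wrd_words: "k \<in> {1..n} \<Longrightarrow> wrd n k x \<in> words n"
  using set_wrd[of n k x] by (auto simp: words_def)

lemma nfw_words: "nfw n h \<in> words n"
  unfolding nfw_def words_def by (auto dest!: subsetD[OF set_wrd])

lemma cls_Cons: "s \<in> {1..2*n} \<Longrightarrow> w \<in> words n \<Longrightarrow> cls n (s # w) = cls n [s] \<otimes>\<^bsub>coxW n\<^esub> cls n w"
  by (simp add: mult_cls)

lemma cls_in: "w \<in> words n \<Longrightarrow> cls n w \<in> carrier (coxW n)"
  by (simp add: carrier_coxW)

lemma cls_inv_gen: "s \<in> {1..2*n} \<Longrightarrow> cls n [s] \<otimes>\<^bsub>coxW n\<^esub> cls n [s] = \<one>\<^bsub>coxW n\<^esub>"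
proof -
  assume s: "s \<in> {1..2*n}"
  have "weq n ([] @ [s,s] @ []) ([] @ [])"
    using s by (intro weq.weq_rel) (auto simp: relators_def)
  then show ?thesis using s by (simp add: mult_cls one_coxW cls_eq_iff)
qed

lemma cls_replicate: "u \<in> words n \<Longrightarrow>
  cls n (concat (replicate m u)) = cls n u [^]\<^bsub>coxW n\<^esub> m"
proof (induction m)
  case 0 then show ?case by (simp add: one_coxW)
next
  case (Suc m)
  interpret group "coxW n" by (rule group_coxW)
  have "concat (replicate m u) \<in> words n" using Suc.prems by (auto simp: words_def)
  moreover have "cls n u \<otimes>\<^bsub>coxW n\<^esub> cls n u [^]\<^bsub>coxW n\<^esub> m = cls n u [^]\<^bsub>coxW n\<^esub> Suc m"
    using Suc.prems by (metis nat_pow_Suc2 cls_in)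
  ultimately show ?case using Suc by (simp add: mult_cls[symmetric] cls_in del: nat_pow_Suc)
qed

lemma crd_k: "k \<in> {1..n} \<Longrightarrow> crd n k = k" "k \<in> {1..n} \<Longrightarrow> crd n (n+k) = k"
  by (auto simp: crd_def)

lemma cls_wrd:
  assumes k: "k \<in> {1..n}"
  defines "a \<equiv> cls n [k]" and "b \<equiv> cls n [n+k]"
  shows "cls n (wrd n k x) = (b \<otimes>\<^bsub>coxW n\<^esub> a) [^]\<^bsub>coxW n\<^esub> (snd x)
           \<otimes>\<^bsub>coxW n\<^esub> (if fst x then a else \<one>\<^bsub>coxW n\<^esub>)"
proof -
  interpret group "coxW n" by (rule group_coxW)
  have ka: "k \<in> {1..2*n}" "n + k \<in> {1..2*n}" using k by auto
  have a: "a \<in> carrier (coxW n)" and b: "b \<in> carrier (coxW n)"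
    unfolding a_def b_def using ka by (auto intro!: cls_in)
  have aa: "a \<otimes>\<^bsub>coxW n\<^esub> a = \<one>\<^bsub>coxW n\<^esub>" and bb: "b \<otimes>\<^bsub>coxW n\<^esub> b = \<one>\<^bsub>coxW n\<^esub>"
    unfolding a_def b_def using ka by (auto intro!: cls_inv_gen)
  have ia: "inv\<^bsub>coxW n\<^esub> a = a" using inv_equality[OF aa a a] .
  have ib: "inv\<^bsub>coxW n\<^esub> b = b" using inv_equality[OF bb b b] .
  have ba: "cls n [n+k, k] = b \<otimes>\<^bsub>coxW n\<^esub> a" using ka by (simp add: a_def b_def mult_cls)
  have ab: "cls n [k, n+k] = inv\<^bsub>coxW n\<^esub> (b \<otimes>\<^bsub>coxW n\<^esub> a)"
  proof -
    have "cls n [k, n+k] = a \<otimes>\<^bsub>coxW n\<^esub> b" using ka by (simp add: a_def b_def mult_cls)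
    then show ?thesis using a b by (simp add: inv_mult_group ia ib)
  qed
  have w1: "[n+k, k] \<in> words n" "[k, n+k] \<in> words n" using ka by auto
  have pre: "cls n ((if snd x \<ge> 0 then concat (replicate (nat (snd x)) [n+k, k])
                else concat (replicate (nat (- snd x)) [k, n+k])))
           = (b \<otimes>\<^bsub>coxW n\<^esub> a) [^]\<^bsub>coxW n\<^esub> (snd x)"
  proof (cases "snd x \<ge> 0")
    case True
    then show ?thesis
      by (simp only: if_True cls_replicate[OF w1(1)] ba pow_nat)
  next
    case False
    then have "cls n (concat (replicate (nat (- snd x)) [k, n+k]))
       = inv\<^bsub>coxW n\<^esub> ((b \<otimes>\<^bsub>coxW n\<^esub> a) [^]\<^bsub>coxW n\<^esub> nat (- snd x))"
      by (simp only: cls_replicate[OF w1(2)] ab nat_pow_inv a b m_closed)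
    also have "\<dots> = (b \<otimes>\<^bsub>coxW n\<^esub> a) [^]\<^bsub>coxW n\<^esub> (snd x)"
      using False by (simp add: int_pow_def2[of _ _ "snd x"])
    finally show ?thesis using False by simp
  qed
  have pw: "(if snd x \<ge> 0 then concat (replicate (nat (snd x)) [n+k, k])
                else concat (replicate (nat (- snd x)) [k, n+k])) \<in> words n"
    using w1 by (auto simp: words_def)
  show ?thesis
    unfolding wrd_def using pw ka
    by (auto simp: mult_cls[symmetric] pre a_def one_coxW)
qed



lemma cmp_gval: "k \<in> {1..n} \<Longrightarrow> cmp (gval n k) (e, t) = (\<not> e, - t)"
  "k \<in> {1..n} \<Longrightarrow> cmp (gval n (n+k)) (e, t) = (\<not> e, 1 - t)"
  by (auto simp: gval_def)

lemma cls_prepend_wrd: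
  assumes k: "k \<in> {1..n}" and s: "s = k \<or> s = n + k"
  shows "cls n (s # wrd n k x) = cls n (wrd n k (cmp (gval n s) x))"
proof -
  interpret group "coxW n" by (rule group_coxW)
  obtain e t where x: "x = (e, t)" by (cases x)
  define a where "a = cls n [k]"
  define b where "b = cls n [n+k]"
  have ka: "k \<in> {1..2*n}" "n + k \<in> {1..2*n}" using k by auto
  have a: "a \<in> carrier (coxW n)" and b: "b \<in> carrier (coxW n)"
    unfolding a_def b_def using ka by (auto intro!: cls_in)
  have aa: "a \<otimes>\<^bsub>coxW n\<^esub> a = \<one>\<^bsub>coxW n\<^esub>" and bb: "b \<otimes>\<^bsub>coxW n\<^esub> b = \<one>\<^bsub>coxW n\<^esub>"
    unfolding a_def b_def using ka by (auto intro!: cls_inv_gen)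
  note D = dinf_a[OF a b aa bb]
  have c: "cls n (s # wrd n k x) = cls n [s] \<otimes>\<^bsub>coxW n\<^esub> cls n (wrd n k x)"
    using s ka k by (intro cls_Cons) (auto intro: wrd_words)
  note W = cls_wrd[OF k, folded a_def b_def]
  from s show ?thesis
  proof
    assume sk: "s = k"
    show ?thesis
      using a b D unfolding c W unfolding sk x cmp_gval(1)[OF k] a_def[symmetric]
      by (cases e) (simp_all add: m_assoc)
  next
    assume sk: "s = n + k"
    show ?thesis
      using a b D unfolding c W unfolding sk x cmp_gval(2)[OF k] b_def[symmetric]
      by (cases e) (simp_all add: m_assoc)
  qed
qed

lemma cls_commute_aux:
  assumes "s \<in> {1..2*n}" "x \<in> {1..2*n}" "crd n s \<noteq> crd n x" "s < x"
  shows "cls n [s] \<otimes>\<^bsub>coxW n\<^esub> cls n [x] = cls n [x] \<otimes>\<^bsub>coxW n\<^esub> cls n [s]"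
proof -
  interpret group "coxW n" by (rule group_coxW)
  have "x \<noteq> s + n" using assms by (auto simp: crd_def)
  then have "weq n ([] @ [s,x,s,x] @ []) ([] @ [])"
    using assms by (intro weq.weq_rel) (auto simp: relators_def)
  then have r: "cls n [s,x,s,x] = \<one>\<^bsub>coxW n\<^esub>"
    using assms by (simp add: one_coxW cls_eq_iff)
  have "cls n [s,x,s,x] = cls n [s] \<otimes>\<^bsub>coxW n\<^esub> cls n [x] \<otimes>\<^bsub>coxW n\<^esub> cls n [s] \<otimes>\<^bsub>coxW n\<^esub> cls n [x]"
    using assms by (simp add: mult_cls)
  then have sxsx: "cls n [s] \<otimes>\<^bsub>coxW n\<^esub> cls n [x] \<otimes>\<^bsub>coxW n\<^esub> cls n [s] \<otimes>\<^bsub>coxW n\<^esub> cls n [x] = \<one>\<^bsub>coxW n\<^esub>"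
    using r by simp
  have ca: "cls n [s] \<in> carrier (coxW n)" "cls n [x] \<in> carrier (coxW n)"
    using assms by (auto intro: cls_in)
  show ?thesis
    by (rule commute_of_rel[OF ca cls_inv_gen cls_inv_gen sxsx]) (use assms in auto)
qed

lemma cls_commute:
  assumes "s \<in> {1..2*n}" "x \<in> {1..2*n}" "crd n s \<noteq> crd n x"
  shows "cls n [s] \<otimes>\<^bsub>coxW n\<^esub> cls n [x] = cls n [x] \<otimes>\<^bsub>coxW n\<^esub> cls n [s]"
proof -
  have "s \<noteq> x" using assms by auto
  then show ?thesis using cls_commute_aux[OF assms] cls_commute_aux[of x n s] assms
    by (metis linorder_neqE_nat)
qed

lemma cls_move:
  assumes "s \<in> {1..2*n}" "\<forall>y\<in>set w. y \<in> {1..2*n} \<and> crd n y \<noteq> crd n s"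
  shows "cls n (s # w) = cls n (w @ [s])"
  using assms(2)
proof (induction w)
  case Nil then show ?case by simp
next
  case (Cons y w)
  interpret group "coxW n" by (rule group_coxW)
  have y: "y \<in> {1..2*n}" "crd n y \<noteq> crd n s" and w: "w \<in> words n"
    using Cons.prems by (auto simp: words_def)
  have "cls n (s # y # w) = cls n [s] \<otimes>\<^bsub>coxW n\<^esub> cls n [y] \<otimes>\<^bsub>coxW n\<^esub> cls n w"
    using assms y w by (simp add: mult_cls)
  also have "\<dots> = cls n [y] \<otimes>\<^bsub>coxW n\<^esub> (cls n [s] \<otimes>\<^bsub>coxW n\<^esub> cls n w)"
    using cls_commute[OF assms(1) y(1)] y assms w by (simp add: m_assoc[symmetric] cls_in)
  also have "\<dots> = cls n [y] \<otimes>\<^bsub>coxW n\<^esub> cls n (w @ [s])"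
    using Cons assms w by (simp add: mult_cls)
  also have "\<dots> = cls n (y # w @ [s])"
    using assms y w by (simp add: mult_cls)
  finally show ?case by simp
qed

definition valid :: "nat \<Rightarrow> (nat \<Rightarrow> dv) \<Rightarrow> bool" where
  "valid n h \<longleftrightarrow> (\<forall>k. k \<notin> {1..n} \<longrightarrow> h k = (False, 0))"

lemma crd_range: "s \<in> {1..2*n} \<Longrightarrow> crd n s \<in> {1..n}"
  by (auto simp: crd_def)

lemma comp_gen: "s \<in> {1..2*n} \<Longrightarrow> comp (gen n s) h = h(crd n s := cmp (gval n s) (h (crd n s)))"
  by (auto simp: fun_eq_iff comp_def gen_def idD_def)

lemma valid_ev: "w \<in> words n \<Longrightarrow> valid n (ev n w)"
proof (induction w)
  case Nil then show ?case by (simp add: valid_def idD_def)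
next
  case (Cons s w)
  then show ?case using crd_range[of s n] by (auto simp: valid_def comp_gen)
qed

lemma nfw_prepend:
  assumes s: "s \<in> {1..2*n}" and h: "valid n h"
  shows "cls n (s # nfw n h) = cls n (nfw n (comp (gen n s) h))"
proof -
  interpret group "coxW n" by (rule group_coxW)
  define j where "j = crd n s"
  have j: "j \<in> {1..n}" using crd_range[OF s] j_def by simp
  have sj: "s = j \<or> s = n + j" using s j_def by (auto simp: crd_def)
  have ul: "[1..<n+1] = [1..<j] @ j # [Suc j..<n+1]"
  proof -
    have "[1..<n+1] = [1..<j] @ [j..<n+1]"
      using j upt_add_eq_append[of 1 j "n + 1 - j"] by auto
    also have "[j..<n+1] = j # [Suc j..<n+1]" using j by (intro upt_conv_Cons) auto
    finally show ?thesis .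
  qed
  define h' where "h' = comp (gen n s) h"
  have h': "h' = h(j := cmp (gval n s) (h j))" using comp_gen[OF s] by (simp add: h'_def j_def)
  define A where "A = concat (map (\<lambda>k. wrd n k (h k)) [1..<j])"
  define B where "B = concat (map (\<lambda>k. wrd n k (h k)) [Suc j..<n+1])"
  have A': "concat (map (\<lambda>k. wrd n k (h' k)) [1..<j]) = A"
    unfolding A_def h' by (intro arg_cong[where f=concat] map_cong) auto
  have B': "concat (map (\<lambda>k. wrd n k (h' k)) [Suc j..<n+1]) = B"
    unfolding B_def h' by (intro arg_cong[where f=concat] map_cong) auto
  have nf: "nfw n h = A @ wrd n j (h j) @ B" "nfw n h' = A @ wrd n j (h' j) @ B"
    unfolding nfw_def ul map_append list.map concat_append concat.simps append_assoc
    by (simp_all only: A' B' A_def[symmetric] B_def[symmetric])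
  have Aw: "A \<in> words n" and Bw: "B \<in> words n"
    unfolding A_def B_def words_def using j by (auto dest!: subsetD[OF set_wrd])
  have Ac0: "\<forall>y\<in>set A. y \<in> {1..2*n} \<and> crd n y \<noteq> j"
    unfolding A_def using j by (auto dest!: subsetD[OF set_wrd] simp: crd_def)
  then have Ac: "\<forall>y\<in>set A. y \<in> {1..2*n} \<and> crd n y \<noteq> crd n s" by (simp add: j_def)
  have ww: "wrd n j x \<in> words n" for x using wrd_words[OF j] .
  have "cls n (s # nfw n h) = cls n (s # A) \<otimes>\<^bsub>coxW n\<^esub> cls n (wrd n j (h j) @ B)"
    using s Aw Bw ww by (simp add: nf mult_cls)
  also have "\<dots> = cls n A \<otimes>\<^bsub>coxW n\<^esub> cls n (s # wrd n j (h j)) \<otimes>\<^bsub>coxW n\<^esub> cls n B"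
    using s Aw Bw ww by (simp add: cls_move[OF s Ac] mult_cls)
  also have "\<dots> = cls n A \<otimes>\<^bsub>coxW n\<^esub> cls n (wrd n j (h' j)) \<otimes>\<^bsub>coxW n\<^esub> cls n B"
    using cls_prepend_wrd[OF j sj] h' by simp
  also have "\<dots> = cls n (nfw n h')"
    using Aw Bw ww by (simp add: nf mult_cls)
  finally show ?thesis by (simp add: h'_def)
qed

lemma cls_nf: "w \<in> words n \<Longrightarrow> cls n w = cls n (nfw n (ev n w))"
proof (induction w)
  case Nil
  have "nfw n idD = []"
    by (simp add: nfw_def idD_def wrd_def)
  then show ?case by simp
next
  case (Cons s w)
  then have s: "s \<in> {1..2*n}" and w: "w \<in> words n" by auto
  have "cls n (s # w) = cls n [s] \<otimes>\<^bsub>coxW n\<^esub> cls n w"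
    using s w by (simp add: mult_cls)
  also have "\<dots> = cls n [s] \<otimes>\<^bsub>coxW n\<^esub> cls n (nfw n (ev n w))"
    using Cons.IH w by simp
  also have "\<dots> = cls n (s # nfw n (ev n w))" using s by (simp add: mult_cls nfw_words)
  also have "\<dots> = cls n (nfw n (ev n (s # w)))"
    using nfw_prepend[OF s valid_ev[OF w]] by simp
  finally show ?case .
qed

lemma faithful: "X \<in> carrier (coxW n) \<Longrightarrow> X = cls n (nfw n (evX n X))"
proof -
  assume "X \<in> carrier (coxW n)"
  then obtain w where w: "w \<in> words n" "X = cls n w" by (auto simp: carrier_coxW)
  then show ?thesis using cls_nf[OF w(1)] evX_cls[OF w(1)] by simp
qed

lemma faithful_eq: "X \<in> carrier (coxW n) \<Longrightarrow> Y \<in> carrier (coxW n) \<Longrightarrow> evX n X = evX n Y \<Longrightarrow> X = Y"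
  by (metis faithful)



lemma gen_k: "k \<in> {1..n} \<Longrightarrow> gen n k = idD(k := (True, 0))"
  "k \<in> {1..n} \<Longrightarrow> gen n (n+k) = idD(k := (True, 1))"
  by (auto simp: gen_def crd_def gval_def)

lemma ev_rep_ba: "k \<in> {1..n} \<Longrightarrow> ev n (concat (replicate m [n+k, k])) = idD(k := (False, int m))"
  by (induction m) (auto simp: gen_k comp_def fun_eq_iff idD_def)

lemma ev_rep_ab: "k \<in> {1..n} \<Longrightarrow> ev n (concat (replicate m [k, n+k])) = idD(k := (False, - int m))"
  by (induction m) (auto simp: gen_k comp_def fun_eq_iff idD_def)

lemma ev_wrd: "k \<in> {1..n} \<Longrightarrow> ev n (wrd n k x) = idD(k := x)"
  by (cases x) (auto simp: wrd_def ev_append ev_rep_ba ev_rep_ab gen_k comp_def fun_eq_iff idD_def)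

lemma ev_nfw_gen: "distinct ks \<Longrightarrow> set ks \<subseteq> {1..n} \<Longrightarrow>
  ev n (concat (map (\<lambda>k. wrd n k (h k)) ks)) = (\<lambda>i. if i \<in> set ks then h i else (False, 0))"
  by (induction ks) (auto simp: ev_append ev_wrd comp_def fun_eq_iff idD_def)

lemma ev_nfw: "valid n h \<Longrightarrow> ev n (nfw n h) = h"
  unfolding nfw_def by (subst ev_nfw_gen) (auto simp: valid_def fun_eq_iff)

lemma evX_nfw: "valid n h \<Longrightarrow> evX n (cls n (nfw n h)) = h"
  by (simp add: evX_cls nfw_words ev_nfw)

lemma evX_valid: "X \<in> carrier (coxW n) \<Longrightarrow> valid n (evX n X)"
  by (auto simp: carrier_coxW evX_cls valid_ev)

lemma rep_words: "X \<in> carrier (coxW n) \<Longrightarrow> rep X \<in> words n"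
  by (auto simp: carrier_coxW rep_cls_words)

definition cset :: "(nat \<Rightarrow> nat \<Rightarrow> bool) \<Rightarrow> (nat \<Rightarrow> dv) \<Rightarrow> nat \<Rightarrow> nat set" where
  "cset c h k = {j \<in> {1..<k}. c j k \<and> odd (snd (h j))}"

definition LW :: "nat \<Rightarrow> (nat \<Rightarrow> nat \<Rightarrow> bool) \<Rightarrow> (nat \<Rightarrow> dv) \<Rightarrow> nat \<Rightarrow> bool" where
  "LW n c h k = (k \<in> {1..n} \<and> (fst (h k) \<noteq> odd (card (cset c h k))))"

lemma lam_word_Cons: "lam_word n c (s # w) = (\<lambda>k. lam n c s k \<noteq> lam_word n c w k)"
  by (simp add: lam_word_def)

lemma lam_word_Nil: "lam_word n c [] = (\<lambda>_. False)"
  by (simp add: lam_word_def)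

lemma odd_card_toggle:
  assumes "finite S" "S' = (if j \<in> S then S - {j} else insert j S)"
  shows "odd (card S') = (\<not> odd (card S))"
proof (cases "j \<in> S")
  case True
  then have "card S = Suc (card S')" using assms card_Suc_Diff1[OF assms(1) True]
    by simp
  then show ?thesis by simp
next
  case False
  then show ?thesis using assms by simp
qed

lemma cset_upd:
  assumes j: "j \<in> {1..n}" and k: "k \<noteq> j"
  shows "cset c (h(j := y)) k =
    (if j < k \<and> c j k \<and> odd (snd y) \<noteq> odd (snd (h j))
     then (if j \<in> cset c h k then cset c h k - {j} else insert j (cset c h k))
     else cset c h k)"
  using j k by (auto simp: cset_def)

lemma cset_upd_same:
  "cset c (h(k := y)) k = cset c h k"
  by (auto simp: cset_def)

lemma finite_cset: "finite (cset c h k)"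
  by (simp add: cset_def)

lemma LW_step:
  assumes s: "s \<in> {1..2*n}"
  shows "LW n c (comp (gen n s) h) k = (lam n c s k \<noteq> LW n c h k)"
proof -
  define j where "j = crd n s"
  have j: "j \<in> {1..n}" using crd_range[OF s] by (simp add: j_def)
  have cg: "comp (gen n s) h = h(j := cmp (gval n s) (h j))" using comp_gen[OF s] by (simp add: j_def)
  obtain e t where ht: "h j = (e, t)" by (cases "h j")
  have cv: "cmp (gval n s) (h j) = (\<not> e, if s \<le> n then - t else 1 - t)"
    using ht by (auto simp: gval_def)
  have sj: "s \<le> n \<Longrightarrow> s = j" "\<not> s \<le> n \<Longrightarrow> s = n + j" using s by (auto simp: j_def crd_def)
  show ?thesis
  proof (cases "k \<in> {1..n}")
    case False
    have "\<not> lam n c s k"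
    proof (cases "s \<le> n")
      case True then show ?thesis using False s by (simp add: lam_def, linarith)
    next
      case F2: False
      then have "s - n \<ge> 1" "s - n \<le> n" using s by auto
      then show ?thesis using False F2 by (simp add: lam_def) (metis Suc_leI le_trans less_imp_le_nat not_less_eq_eq)
    qed
    then show ?thesis using False by (auto simp: LW_def)
  next
    case kin: True
    show ?thesis
    proof (cases "k = j")
      case True
      then show ?thesis using kin sj ht
        unfolding cg LW_def cset_upd_same cv lam_def
        by (cases "s \<le> n") (auto simp: cset_upd_same)
    next
      case False
      have fk: "fst ((h(j := cmp (gval n s) (h j))) k) = fst (h k)" using False by simp
      show ?thesis
      proof (cases "s \<le> n")
        case True
        then have "cset c (h(j := cmp (gval n s) (h j))) k = cset c h k"
          using cset_upd[OF j False, of c h] cv ht by simp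
        then show ?thesis using True False sj kin unfolding cg LW_def lam_def
          by auto
      next
        case sn: False
        have lm: "lam n c s k = (j < k \<and> c j k)" using sn sj kin False by (auto simp: lam_def)
        have odd_ch: "odd (snd (cmp (gval n s) (h j))) \<noteq> odd (snd (h j))"
          using cv ht sn by auto
        show ?thesis
        proof (cases "j < k \<and> c j k")
          case True
          then have "odd (card (cset c (h(j := cmp (gval n s) (h j))) k)) = (\<not> odd (card (cset c h k)))"
            using cset_upd[OF j False, of c h] odd_ch by (intro odd_card_toggle[OF finite_cset]) auto
          then show ?thesis using True lm fk kin unfolding cg LW_def by auto
        next
          case False2: False
          then have "cset c (h(j := cmp (gval n s) (h j))) k = cset c h k"
            using cset_upd[OF j False, of c h] by auto
          then show ?thesis using False2 lm fk kin unfolding cg LW_def by auto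
        qed
      qed
    qed
  qed
qed

lemma LW_idD: "LW n c idD = (\<lambda>_. False)"
  by (auto simp: LW_def idD_def cset_def fun_eq_iff)

lemma lam_word_ev: "w \<in> words n \<Longrightarrow> lam_word n c w = LW n c (ev n w)"
proof (induction w)
  case Nil then show ?case by (simp add: lam_word_Nil LW_idD)
next
  case (Cons s w)
  then show ?case by (auto simp: lam_word_Cons LW_step fun_eq_iff)
qed

lemma pi1_iff: "X \<in> pi1 n c \<longleftrightarrow> X \<in> carrier (coxW n) \<and> (\<forall>k. \<not> LW n c (evX n X) k)"
  by (auto simp: pi1_def kernel_def Z2n_def lamhom_def evX_def lam_word_ev rep_words fun_eq_iff)



definition Jc :: "nat \<Rightarrow> (nat \<Rightarrow> nat \<Rightarrow> bool) \<Rightarrow> nat set" where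
  "Jc n c = {k \<in> {1..n}. \<exists>i. 1 \<le> i \<and> i < k \<and> c i k}"

definition TT :: "nat \<Rightarrow> (nat \<Rightarrow> nat \<Rightarrow> bool) \<Rightarrow> (nat \<Rightarrow> dv) \<Rightarrow> bool" where
  "TT n c h = (valid n h \<and> (\<forall>k. \<not> fst (h k) \<and> even (snd (h k)) \<and> (k \<notin> Jc n c \<longrightarrow> snd (h k) = 0)))"

definition TW :: "nat \<Rightarrow> (nat \<Rightarrow> nat \<Rightarrow> bool) \<Rightarrow> nat list set set" where
  "TW n c = {X \<in> carrier (coxW n). TT n c (evX n X)}"

lemma cmp_FF: "\<not> fst x \<Longrightarrow> \<not> fst y \<Longrightarrow> cmp x y = (False, snd y + snd x)"
  by (cases x; cases y) auto

lemma TT_comp: "TT n c h1 \<Longrightarrow> TT n c h2 \<Longrightarrow> TT n c (comp h1 h2)"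
  unfolding TT_def valid_def comp_def by (auto simp: cmp_FF)

lemma TW_subgroup: "subgroup (TW n c) (coxW n)"
proof -
  interpret group "coxW n" by (rule group_coxW)
  show ?thesis
  proof (rule subgroupI)
    show "TW n c \<subseteq> carrier (coxW n)" by (auto simp: TW_def)
    have "\<one>\<^bsub>coxW n\<^esub> \<in> TW n c"
      by (auto simp: TW_def evX_one TT_def idD_def valid_def)
    then show "TW n c \<noteq> {}" by auto
  next
    fix a assume "a \<in> TW n c"
    then show "inv\<^bsub>coxW n\<^esub> a \<in> TW n c"
      by (auto simp: TW_def evX_inv TT_def valid_def cinv_def)
  next
    fix a b assume "a \<in> TW n c" "b \<in> TW n c"
    then show "a \<otimes>\<^bsub>coxW n\<^esub> b \<in> TW n c"
      by (auto simp: TW_def evX_mult TT_comp)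
  qed
qed

definition ccomm :: "dv \<Rightarrow> dv \<Rightarrow> dv" where
  "ccomm x y = cmp (cmp (cmp x y) (cinv x)) (cinv y)"

lemma ccomm_props:
  "\<not> fst (ccomm x y)" "even (snd (ccomm x y))" "\<not> fst x \<Longrightarrow> \<not> fst y \<Longrightarrow> snd (ccomm x y) = 0"
  by (cases x; cases y; auto simp: ccomm_def cinv_def)+

lemma evX_comm:
  assumes "X \<in> carrier (coxW n)" "Y \<in> carrier (coxW n)"
  shows "evX n (X \<otimes>\<^bsub>coxW n\<^esub> Y \<otimes>\<^bsub>coxW n\<^esub> inv\<^bsub>coxW n\<^esub> X \<otimes>\<^bsub>coxW n\<^esub> inv\<^bsub>coxW n\<^esub> Y)
     = (\<lambda>k. ccomm (evX n X k) (evX n Y k))"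
proof -
  interpret group "coxW n" by (rule group_coxW)
  show ?thesis using assms
    by (simp add: evX_mult evX_inv comp_def ccomm_def)
qed

lemma pi1_fst:
  assumes "X \<in> pi1 n c" "k \<notin> Jc n c"
  shows "\<not> fst (evX n X k)"
proof (cases "k \<in> {1..n}")
  case True
  have "cset c (evX n X) k = {}" using assms(2) True by (auto simp: cset_def Jc_def)
  then show ?thesis using assms(1) True by (auto simp: pi1_iff LW_def)
next
  case False
  then show ?thesis using assms(1) evX_valid[of X n] by (auto simp: pi1_iff valid_def)
qed

lemma comm_TW:
  assumes "X \<in> pi1 n c" "Y \<in> pi1 n c"
  shows "X \<otimes>\<^bsub>coxW n\<^esub> Y \<otimes>\<^bsub>coxW n\<^esub> inv\<^bsub>coxW n\<^esub> X \<otimes>\<^bsub>coxW n\<^esub> inv\<^bsub>coxW n\<^esub> Y \<in> TW n c"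
proof -
  interpret group "coxW n" by (rule group_coxW)
  have c: "X \<in> carrier (coxW n)" "Y \<in> carrier (coxW n)" using assms by (auto simp: pi1_iff)
  have v: "valid n (evX n X)" "valid n (evX n Y)" using c by (auto intro: evX_valid)
  have vv: "valid n (\<lambda>k. ccomm (evX n X k) (evX n Y k))"
    using v by (auto simp: valid_def ccomm_def cinv_def)
  show ?thesis unfolding TW_def
    using c vv pi1_fst[OF assms(1)] pi1_fst[OF assms(2)]
    by (auto simp: evX_comm TT_def ccomm_props)
qed

lemma derived_TW: "derived (coxW n) (pi1 n c) \<subseteq> TW n c"
proof -
  interpret group "coxW n" by (rule group_coxW)
  show ?thesis unfolding derived_def
    by (rule generate_subgroup_incl[OF _ TW_subgroup]) (auto intro: comm_TW)
qed



lemma ev_letters: "distinct ks \<Longrightarrow> set ks \<subseteq> {1..n} \<Longrightarrow>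
  ev n ks = (\<lambda>k. if k \<in> set ks then (True, 0) else (False, 0))"
  by (induction ks) (auto simp: gen_k comp_def fun_eq_iff idD_def)

definition AL :: "nat \<Rightarrow> (nat \<Rightarrow> nat \<Rightarrow> bool) \<Rightarrow> nat \<Rightarrow> nat \<Rightarrow> dv" where
  "AL n c i = (\<lambda>k. if k = i then (False, 1) else if i < k \<and> k \<le> n \<and> c i k then (True, 0) else (False, 0))"

lemma alpha_word:
  assumes i: "i \<in> {1..n}"
  shows "alpha n c (n+i) = cls n ([n+i, i] @ filter (c i) [i+1..<n+1])"
    and "[n+i, i] @ filter (c i) [i+1..<n+1] \<in> words n"
  using i by (auto simp: alpha_def words_def)

lemma evX_alpha:
  assumes i: "i \<in> {1..n}"
  shows "evX n (alpha n c (n+i)) = AL n c i"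
proof -
  have fl: "ev n (filter (c i) [i+1..<n+1]) = (\<lambda>k. if i < k \<and> k \<le> n \<and> c i k then (True, 0) else (False, 0))"
    by (subst ev_letters) (auto simp: fun_eq_iff)
  have "evX n (alpha n c (n+i)) = comp (gen n (n+i)) (comp (gen n i)
      (\<lambda>k. if i < k \<and> k \<le> n \<and> c i k then (True, 0) else (False, 0)))"
    unfolding alpha_word(1)[OF i] evX_cls[OF alpha_word(2)[OF i]]
    by (simp only: ev_Cons append_Cons append_Nil fl)
  then show ?thesis using i
    by (auto simp: gen_k comp_def fun_eq_iff AL_def idD_def)
qed

lemma alpha_carrier: "i \<in> {1..n} \<Longrightarrow> alpha n c (n+i) \<in> carrier (coxW n)"
  using alpha_word by (auto simp: carrier_coxW)

lemma cset_AL: assumes i: "i \<in> {1..n}"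
  shows "cset c (AL n c i) k = (if i < k \<and> c i k then {i} else {})"
  using i by (auto simp: cset_def AL_def)

lemma alpha_pi1: assumes i: "i \<in> {1..n}" shows "alpha n c (n+i) \<in> pi1 n c"
  unfolding pi1_iff using alpha_carrier[OF i]
  by (auto simp: evX_alpha[OF i] LW_def cset_AL[OF i] simp del: One_nat_def) (auto simp: AL_def split: if_splits)

lemma alpha_sq: assumes i: "i \<in> {1..n}"
  shows "evX n (alpha n c (n+i) \<otimes>\<^bsub>coxW n\<^esub> alpha n c (n+i)) = idD(i := (False, 2))"
  using i alpha_carrier[OF i]
  by (auto simp: evX_mult evX_alpha comp_def AL_def fun_eq_iff idD_def)

lemma alpha_comm: assumes "1 \<le> i" "i < j" "j \<le> n" "c i j"
  shows "evX n (alpha n c (n+j) \<otimes>\<^bsub>coxW n\<^esub> alpha n c (n+i) \<otimes>\<^bsub>coxW n\<^esub>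
      inv\<^bsub>coxW n\<^esub> alpha n c (n+j) \<otimes>\<^bsub>coxW n\<^esub> inv\<^bsub>coxW n\<^esub> alpha n c (n+i)) = idD(j := (False, 2))"
proof -
  have i: "i \<in> {1..n}" and j: "j \<in> {1..n}" using assms by auto
  show ?thesis
    using assms alpha_carrier[OF i] alpha_carrier[OF j]
    by (auto simp: evX_comm evX_alpha[OF i] evX_alpha[OF j] AL_def fun_eq_iff idD_def ccomm_def cinv_def)
qed



definition TR :: "nat \<Rightarrow> (nat \<Rightarrow>\<^sub>0 int) \<Rightarrow> nat \<Rightarrow> dv" where
  "TR n f = (\<lambda>k. if k \<in> {1..n} then (False, 2 * Poly_Mapping.lookup f (n+k)) else (False, 0))"

definition phi :: "nat \<Rightarrow> (nat \<Rightarrow>\<^sub>0 int) \<Rightarrow> nat list set" where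
  "phi n f = cls n (nfw n (TR n f))"

lemma TR_valid: "valid n (TR n f)" by (simp add: TR_def valid_def)

lemma phi_carrier: "phi n f \<in> carrier (coxW n)"
  by (simp add: phi_def cls_in nfw_words)

lemma evX_phi: "evX n (phi n f) = TR n f"
  by (simp add: phi_def evX_nfw TR_valid)

lemma S_iff: "k \<in> {1..n} \<Longrightarrow> n + k \<in> index_set n c \<longleftrightarrow> k \<in> Jc n c"
proof
  assume k: "k \<in> {1..n}" and "n + k \<in> index_set n c"
  then obtain p where p: "n + 1 \<le> p" "p < n + k" "c (p - n) k" by (auto simp: index_set_def)
  then show "k \<in> Jc n c" using k unfolding Jc_def
    by (intro CollectI conjI exI[of _ "p - n"]) auto
next
  assume k: "k \<in> {1..n}" and "k \<in> Jc n c"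
  then obtain i where i: "1 \<le> i" "i < k" "c i k" by (auto simp: Jc_def)
  then show "n + k \<in> index_set n c" using k unfolding index_set_def
    by (intro CollectI conjI exI[of _ "n + i"]) auto
qed

lemma S_form: "q \<in> index_set n c \<Longrightarrow> q = n + (q - n) \<and> q - n \<in> {1..n}"
  by (auto simp: index_set_def)

lemma finite_S: "finite (index_set n c)"
  by (rule finite_subset[of _ "{..2*n}"]) (auto simp: index_set_def)

lemma phi_frag: assumes q: "q \<in> index_set n c"
  shows "phi n (frag_of q) = alpha n c q \<otimes>\<^bsub>coxW n\<^esub> alpha n c q"
proof -
  interpret group "coxW n" by (rule group_coxW)
  define i where "i = q - n"
  have qi: "q = n + i" and i: "i \<in> {1..n}" using S_form[OF q] by (auto simp: i_def)
  show ?thesis unfolding qi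
    using i alpha_carrier[OF i] phi_carrier
    by (intro faithful_eq) (auto simp: evX_phi alpha_sq TR_def fun_eq_iff idD_def)
qed

lemma alpha_sq_D: assumes q: "q \<in> index_set n c"
  shows "alpha n c q \<otimes>\<^bsub>coxW n\<^esub> alpha n c q \<in> derived (coxW n) (pi1 n c)"
proof -
  interpret group "coxW n" by (rule group_coxW)
  define j where "j = q - n"
  have qj: "q = n + j" and j: "j \<in> {1..n}" using S_form[OF q] by (auto simp: j_def)
  have "j \<in> Jc n c" using S_iff[OF j] q qj by simp
  then obtain i where i: "1 \<le> i" "i < j" "c i j" by (auto simp: Jc_def)
  have ii: "i \<in> {1..n}" using i j by auto
  have eq: "alpha n c (n+j) \<otimes>\<^bsub>coxW n\<^esub> alpha n c (n+j) =
     alpha n c (n+j) \<otimes>\<^bsub>coxW n\<^esub> alpha n c (n+i) \<otimes>\<^bsub>coxW n\<^esub>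
      inv\<^bsub>coxW n\<^esub> alpha n c (n+j) \<otimes>\<^bsub>coxW n\<^esub> inv\<^bsub>coxW n\<^esub> alpha n c (n+i)"
    using alpha_carrier[OF ii] alpha_carrier[OF j] i j
    by (intro faithful_eq) (auto simp: alpha_sq alpha_comm)
  have "alpha n c (n+j) \<otimes>\<^bsub>coxW n\<^esub> alpha n c (n+i) \<otimes>\<^bsub>coxW n\<^esub>
      inv\<^bsub>coxW n\<^esub> alpha n c (n+j) \<otimes>\<^bsub>coxW n\<^esub> inv\<^bsub>coxW n\<^esub> alpha n c (n+i)
     \<in> derived (coxW n) (pi1 n c)"
    unfolding derived_def using alpha_pi1[OF ii] alpha_pi1[OF j]
    by (intro generate.incl) blast
  then show ?thesis using eq qj by simp
qed

lemma pi1_sub: "pi1 n c \<subseteq> carrier (coxW n)"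
  by (auto simp: pi1_iff)

lemma D_subgroup: "subgroup (derived (coxW n) (pi1 n c)) (coxW n)"
proof -
  interpret group "coxW n" by (rule group_coxW)
  show ?thesis by (rule derived_is_subgroup[OF pi1_sub])
qed

lemma phi_D: assumes "Poly_Mapping.keys f \<subseteq> index_set n c"
  shows "phi n f \<in> derived (coxW n) (pi1 n c)"
  using assms
proof (induction f rule: frag_induction)
  case zero
  interpret group "coxW n" by (rule group_coxW)
  have "phi n 0 = \<one>\<^bsub>coxW n\<^esub>"
    using phi_carrier by (intro faithful_eq) (auto simp: evX_phi evX_one TR_def fun_eq_iff idD_def)
  then show ?case using subgroup.one_closed[OF D_subgroup] by simp
next
  case (one x)
  then show ?case by (simp add: phi_frag alpha_sq_D)
next
  case (diff a b)
  interpret group "coxW n" by (rule group_coxW)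
  have "phi n (a - b) = phi n a \<otimes>\<^bsub>coxW n\<^esub> inv\<^bsub>coxW n\<^esub> phi n b"
    using phi_carrier
    by (intro faithful_eq) (auto simp: evX_phi evX_mult evX_inv TR_def fun_eq_iff comp_def cinv_def lookup_minus)
  then show ?case using diff subgroup.m_closed[OF D_subgroup] subgroup.m_inv_closed[OF D_subgroup]
    by simp
qed

lemma phi_inj: "inj_on (phi n) (carrier (free_Abelian_group (index_set n c)))"
proof (rule inj_onI)
  fix f g assume f: "f \<in> carrier (free_Abelian_group (index_set n c))"
    and g: "g \<in> carrier (free_Abelian_group (index_set n c))" and eq: "phi n f = phi n g"
  have "TR n f = TR n g" using arg_cong[OF eq, of "evX n"] by (simp add: evX_phi)
  then have L: "k \<in> {1..n} \<Longrightarrow> Poly_Mapping.lookup f (n+k) = Poly_Mapping.lookup g (n+k)" for k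
    by (auto simp: TR_def fun_eq_iff dest: spec[of _ k])
  show "f = g"
  proof (rule poly_mapping_eqI)
    fix x
    show "Poly_Mapping.lookup f x = Poly_Mapping.lookup g x"
    proof (cases "x \<in> index_set n c")
      case True
      then show ?thesis using S_form[OF True] L[of "x - n"] by metis
    next
      case False
      then have "x \<notin> Poly_Mapping.keys f" "x \<notin> Poly_Mapping.keys g"
        using f g by (auto simp: free_Abelian_group_def)
      then show ?thesis by (simp add: not_in_keys_iff_lookup_eq_zero)
    qed
  qed
qed

lemma phi_surj: assumes Y: "Y \<in> derived (coxW n) (pi1 n c)"
  shows "Y \<in> phi n ` carrier (free_Abelian_group (index_set n c))"
proof -
  have YT: "Y \<in> TW n c" using derived_TW Y by blast
  then have Yc: "Y \<in> carrier (coxW n)" and T: "TT n c (evX n Y)" by (auto simp: TW_def)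
  define h where "h = evX n Y"
  define g where "g = (\<lambda>q. if q \<in> index_set n c then snd (h (q - n)) div 2 else 0)"
  have fin: "finite {q. g q \<noteq> 0}"
    by (rule finite_subset[OF _ finite_S]) (auto simp: g_def split: if_splits)
  define f where "f = Abs_poly_mapping g"
  have lf: "Poly_Mapping.lookup f = g" using fin by (simp add: f_def)
  have keys: "Poly_Mapping.keys f \<subseteq> index_set n c"
    by (auto simp: in_keys_iff lf g_def split: if_splits)
  have "TR n f = h"
  proof
    fix k
    show "TR n f k = h k"
    proof (cases "k \<in> {1..n}")
      case False
      then show ?thesis using T by (auto simp: TR_def h_def TT_def valid_def)
    next
      case True
      have hk: "\<not> fst (h k)" "even (snd (h k))" "k \<notin> Jc n c \<Longrightarrow> snd (h k) = 0"
        using T by (auto simp: TT_def h_def)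
      show ?thesis
        using True hk S_iff[OF True, of c] by (cases "h k") (auto simp: TR_def lf g_def)
    qed
  qed
  then have "phi n f = Y" using faithful[OF Yc] by (simp add: phi_def h_def)
  then show ?thesis using keys by (auto simp: free_Abelian_group_def)
qed

theorem corollary2p8:
  fixes n :: nat and c :: "nat \<Rightarrow> nat \<Rightarrow> bool"
  assumes "n \<ge> 1" and "bott_matrix n c"
  shows "\<exists>\<phi>. \<phi> \<in> iso (free_Abelian_group (index_set n c))
               (subgroup_generated (coxW n) (derived (coxW n) (pi1 n c)))
           \<and> (\<forall>q\<in>index_set n c.
                \<phi> (frag_of q) = alpha n c q \<otimes>\<^bsub>coxW n\<^esub> alpha n c q)"
proof (intro exI conjI)
  interpret group "coxW n" by (rule group_coxW)
  note cD = subgroup.carrier_subgroup_generated_subgroup[OF D_subgroup]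
  have mD: "x \<otimes>\<^bsub>subgroup_generated (coxW n) H\<^esub> y = x \<otimes>\<^bsub>coxW n\<^esub> y" for x y H
    by (simp add: subgroup_generated_def)
  have hom: "phi n \<in> hom (free_Abelian_group (index_set n c))
               (subgroup_generated (coxW n) (derived (coxW n) (pi1 n c)))"
  proof (rule homI)
    fix x assume "x \<in> carrier (free_Abelian_group (index_set n c))"
    then show "phi n x \<in> carrier (subgroup_generated (coxW n) (derived (coxW n) (pi1 n c)))"
      unfolding cD by (intro phi_D) (simp add: free_Abelian_group_def)
  next
    fix x y
    show "phi n (x \<otimes>\<^bsub>free_Abelian_group (index_set n c)\<^esub> y) =
       phi n x \<otimes>\<^bsub>subgroup_generated (coxW n) (derived (coxW n) (pi1 n c))\<^esub> phi n y"
      unfolding mD mult_free_Abelian_group using phi_carrier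
      by (intro faithful_eq) (auto simp: evX_phi evX_mult TR_def fun_eq_iff comp_def lookup_add)
  qed
  have img: "phi n ` carrier (free_Abelian_group (index_set n c)) = derived (coxW n) (pi1 n c)"
  proof
    show "phi n ` carrier (free_Abelian_group (index_set n c)) \<subseteq> derived (coxW n) (pi1 n c)"
      by (auto intro!: phi_D simp: free_Abelian_group_def)
    show "derived (coxW n) (pi1 n c) \<subseteq> phi n ` carrier (free_Abelian_group (index_set n c))"
      using phi_surj by blast
  qed
  show "phi n \<in> iso (free_Abelian_group (index_set n c))
               (subgroup_generated (coxW n) (derived (coxW n) (pi1 n c)))"
    unfolding iso_def using hom phi_inj img cD by (auto simp: bij_betw_def)
  show "\<forall>q\<in>index_set n c. phi n (frag_of q) = alpha n c q \<otimes>\<^bsub>coxW n\<^esub> alpha n c q"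
    by (simp add: phi_frag)
qed


end
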